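(* Let $\Omega\subset\mathbb{R}^d$, let $y:\Omega\to\mathbb{R}^m$ be a forward model, let $\pi(p)$ be a prior probability density on $\Omega$, let $y^m\in\mathbb{R}^m$, and let $\Sigma\in\mathbb{R}^{m\times m}$ be symmetric positive definite. Define $\pi(y^m\mid p)=(2\pi)^{-m/2}\det(\Sigma^2)^{-1/2}\exp(-\tfrac12\|y^m-y(p)\|_{\Sigma^{-2}}^2)$, $\pi(y^m)=\int_\Omega\pi(p)\pi(y^m\mid p)\,dp$, and $\pi(p\mid y^m)=\pi(p)\pi(y^m\mid p)/\pi(y^m)$. Let $\bar y:\Omega\to\mathbb{R}^m$ and $\Gamma:\Omega\to\mathbb{R}^{m\times m}$ (with $\Gamma(p)$ symmetric positive semidefinite) be the surrogate predictive mean and covariance, $L_{\mathcal D}(p)=(2\pi)^{-m/2}\det(\Sigma^2+\Gamma(p))^{-1/2}\exp(-\tfrac12\|y^m-\bar y(p)\|_{(\Sigma^2+\Gamma(p))^{-1}}^2)$, $\pi_{\mathcal D}(y^m)=\int_\Omega\pi(p)L_{\mathcal D}(p)\,dp$, and $\pi(p\mid y^m,\mathcal D)=\pi(p)L_{\mathcal D}(p)/\pi_{\mathcal D}(y^m)$. Assume $\pi_{\mathcal D}(y^m)\le\alpha\,\pi(y^m)$ for some $\alpha<\infty$. Let $\phi(a,b)=\tfrac12a+b\sqrt a$ and $$\psi(y^m,p)=\tfrac12\operatorname{tr}\big(\Sigma^{-2}\Gamma(p)\big)+\phi\Big(\|\bar y(p)-y(p)\|_{\Sigma^{-2}}^2,\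 \|y^m-y(p)\|_{\Sigma^{-2}}\Big)+\log\alpha.$$ Then $$\int_\Omega\pi(p\mid y^m)\,\|y(p)-\bar y(p)\|_2^2\,dp\le\int_\Omega\pi(p\mid y^m,\mathcal D)\,\|y(p)-\bar y(p)\|_2^2\exp\big(\psi(y^m,p)\big)\,dp.$$
   Context: For a symmetric positive definite matrix $M$, $\|x\|_M=\sqrt{x^TMx}$; $\|\cdot\|_2$ is the Euclidean norm. The left-hand side is the posterior-weighted squared $L^2$ distance $\|y-\bar y\|^2_{L^2(\Omega;\pi(\cdot\mid y^m))}$. *)

theory Defs
  imports "HOL-Analysis.Analysis"
begin

definition wnorm :: "real^'m^'m \<Rightarrow> real^'m \<Rightarrow> real" where
  "wnorm M x = sqrt (x \<bullet> (M *v x))"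

definition gauss_lik :: "real^'m^'m \<Rightarrow> real^'m \<Rightarrow> real" where
  "gauss_lik C r = (2 * pi) powr (- real CARD('m) / 2) * det C powr (- 1 / 2)
                   * exp (- (1 / 2) * (wnorm (matrix_inv C) r)\<^sup>2)"

definition lik :: "real^'m^'m \<Rightarrow> ('d \<Rightarrow> real^'m) \<Rightarrow> real^'m \<Rightarrow> 'd \<Rightarrow> real" where
  "lik \<Sigma> y ym p = gauss_lik (\<Sigma> ** \<Sigma>) (ym - y p)"

definition likD :: "real^'m^'m \<Rightarrow> ('d \<Rightarrow> real^'m) \<Rightarrow> ('d \<Rightarrow> real^'m^'m) \<Rightarrow> real^'m \<Rightarrow> 'd \<Rightarrow> real" where
  "likD \<Sigma> ybar \<Gamma> ym p = gauss_lik (\<Sigma> ** \<Sigma> + \<Gamma> p) (ym - ybar p)"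

definition evidence :: "('d::euclidean_space) set \<Rightarrow> ('d \<Rightarrow> real) \<Rightarrow> real^'m^'m \<Rightarrow> ('d \<Rightarrow> real^'m) \<Rightarrow> real^'m \<Rightarrow> real" where
  "evidence \<Omega> prior \<Sigma> y ym = (LINT p:\<Omega>|lborel. prior p * lik \<Sigma> y ym p)"

definition evidenceD :: "('d::euclidean_space) set \<Rightarrow> ('d \<Rightarrow> real) \<Rightarrow> real^'m^'m \<Rightarrow> ('d \<Rightarrow> real^'m) \<Rightarrow> ('d \<Rightarrow> real^'m^'m) \<Rightarrow> real^'m \<Rightarrow> real" where
  "evidenceD \<Omega> prior \<Sigma> ybar \<Gamma> ym = (LINT p:\<Omega>|lborel. prior p * likD \<Sigma> ybar \<Gamma> ym p)"

definition posterior :: "('d::euclidean_space) set \<Rightarrow> ('d \<Rightarrow> real) \<Rightarrow> real^'m^'m \<Rightarrow> ('d \<Rightarrow> real^'m) \<Rightarrow> real^'m \<Rightarrow> 'd \<Rightarrow> real" where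
  "posterior \<Omega> prior \<Sigma> y ym p = prior p * lik \<Sigma> y ym p / evidence \<Omega> prior \<Sigma> y ym"

definition posteriorD :: "('d::euclidean_space) set \<Rightarrow> ('d \<Rightarrow> real) \<Rightarrow> real^'m^'m \<Rightarrow> ('d \<Rightarrow> real^'m) \<Rightarrow> ('d \<Rightarrow> real^'m^'m) \<Rightarrow> real^'m \<Rightarrow> 'd \<Rightarrow> real" where
  "posteriorD \<Omega> prior \<Sigma> ybar \<Gamma> ym p = prior p * likD \<Sigma> ybar \<Gamma> ym p / evidenceD \<Omega> prior \<Sigma> ybar \<Gamma> ym"

definition phi :: "real \<Rightarrow> real \<Rightarrow> real" where
  "phi a b = a / 2 + b * sqrt a"

definition psi :: "real^'m^'m \<Rightarrow> ('d \<Rightarrow> real^'m) \<Rightarrow> ('d \<Rightarrow> real^'m) \<Rightarrow> ('d \<Rightarrow> real^'m^'m) \<Rightarrow> real \<Rightarrow> real^'m \<Rightarrow> 'd \<Rightarrow> real" where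
  "psi \<Sigma> y ybar \<Gamma> \<alpha> ym p =
     1 / 2 * trace (matrix_inv (\<Sigma> ** \<Sigma>) ** \<Gamma> p)
     + phi ((wnorm (matrix_inv (\<Sigma> ** \<Sigma>)) (ybar p - y p))\<^sup>2) (wnorm (matrix_inv (\<Sigma> ** \<Sigma>)) (ym - y p))
     + ln \<alpha>"

end

theory Submission
  imports Defs
begin

lemma real_aux_zero:
  fixes a b :: real
  assumes b: "b \<ge> 0" and h: "\<And>t. 2 * t * a \<le> t\<^sup>2 * b"
  shows "a = 0"
proof (rule ccontr)
  assume a: "a \<noteq> 0"
  define t where "t = a / (b + 1)"
  have "2 * t * a \<le> t\<^sup>2 * b" by (rule h)
  hence "2 * a * a / (b+1) \<le> a * a * b / ((b+1) * (b+1))"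
    by (simp add: t_def power2_eq_square)
  moreover have "2 * a * a / (b+1) = (2 * a * a * (b+1)) / ((b+1) * (b+1))"
  proof -
    have "b + 1 \<noteq> 0" using b by simp
    thus ?thesis by (metis nonzero_mult_divide_mult_cancel_right)
  qed
  ultimately have "(2 * a * a * (b+1)) / ((b+1) * (b+1)) \<le> a * a * b / ((b+1) * (b+1))"
    by simp
  moreover have "(b+1) * (b+1) > 0" using b by simp
  ultimately have "2 * a * a * (b+1) \<le> a * a * b"
    using divide_le_cancel by blast
  moreover have "a * a > 0" using a by (auto simp: zero_less_mult_iff linorder_neq_iff)
  ultimately have "2 * (b+1) \<le> b"
    by (metis mult.commute mult.left_commute mult_le_cancel_left_pos)
  thus False using b by simp
qed

lemma spectral_subspace:
  fixes C :: "real^'n^'n"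
  assumes sym: "\<And>x y. (C *v x) \<bullet> y = x \<bullet> (C *v y)"
  shows "subspace S \<Longrightarrow> (\<And>x. x \<in> S \<Longrightarrow> C *v x \<in> S) \<Longrightarrow>
    \<exists>B. B \<subseteq> S \<and> pairwise orthogonal B \<and> (\<forall>x\<in>B. norm x = 1) \<and> span B = S
       \<and> (\<forall>b\<in>B. C *v b = (b \<bullet> (C *v b)) *\<^sub>R b)"
proof (induction "dim S" arbitrary: S rule: less_induct)
  case (less S)
  show ?case
  proof (cases "S \<subseteq> {0}")
    case True
    hence "S = {0}" using less.prems(1) subspace_0 by blast
    thus ?thesis by (intro exI[of _ "{}"]) auto
  next
    case False
    then obtain x where x: "x \<in> S" "x \<noteq> 0" by blast
    define K where "K = S \<inter> sphere 0 1"
    have "(x /\<^sub>R norm x) \<in> K" using x less.prems(1)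
      by (auto simp: K_def subspace_scale)
    hence Kne: "K \<noteq> {}" by blast
    have Kc: "compact K" unfolding K_def
      using closed_subspace[OF less.prems(1)] compact_sphere
      by (simp add: compact_Int_closed inf_commute closed_Int_compact)
    have cont: "continuous_on K (\<lambda>v. v \<bullet> (C *v v))"
      by (intro continuous_intros linear_continuous_on matrix_vector_mul_linear)
    obtain x0 where x0K: "x0 \<in> K" and x0max: "\<And>v. v \<in> K \<Longrightarrow> v \<bullet> (C *v v) \<le> x0 \<bullet> (C *v x0)"
      using continuous_attains_sup[OF Kc Kne cont] by blast
    define l where "l = x0 \<bullet> (C *v x0)"
    have x0S: "x0 \<in> S" and nx0: "norm x0 = 1" using x0K by (auto simp: K_def)
    have x0x0: "x0 \<bullet> x0 = 1" using nx0 by (simp add: dot_square_norm)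
    have qbound: "v \<bullet> (C *v v) \<le> l * (v \<bullet> v)" if "v \<in> S" for v
    proof (cases "v = 0")
      case True thus ?thesis by simp
    next
      case False
      have "v /\<^sub>R norm v \<in> K" using that False less.prems(1)
        by (auto simp: K_def subspace_scale)
      hence "(v /\<^sub>R norm v) \<bullet> (C *v (v /\<^sub>R norm v)) \<le> l" using x0max l_def by blast
      hence "(v \<bullet> (C *v v)) / (norm v)\<^sup>2 \<le> l"
        by (simp add: matrix_vector_mult_scaleR power2_eq_square divide_inverse ac_simps)
      moreover have "(norm v)\<^sup>2 > 0" using False by simp
      ultimately show ?thesis by (simp add: divide_le_eq dot_square_norm)
    qed
    have Cx0S: "C *v x0 \<in> S" using less.prems(2) x0S .
    define w where "w = C *v x0 - l *\<^sub>R x0"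
    have wS: "w \<in> S" unfolding w_def using Cx0S x0S less.prems(1)
      by (simp add: subspace_diff subspace_scale)
    have wx0: "w \<bullet> x0 = 0" unfolding w_def using x0x0 l_def
      by (simp add: inner_diff_left inner_diff_right inner_commute)
    define a where "a = w \<bullet> (C *v x0)"
    define b where "b = l * (w \<bullet> w) - w \<bullet> (C *v w)"
    have b0: "b \<ge> 0" using qbound[OF wS] by (simp add: b_def)
    have "2 * t * a \<le> t\<^sup>2 * b" for t
    proof -
      have "x0 + t *\<^sub>R w \<in> S" using x0S wS less.prems(1)
        by (simp add: subspace_add subspace_scale)
      hence h1: "(x0 + t *\<^sub>R w) \<bullet> (C *v (x0 + t *\<^sub>R w)) \<le> l * ((x0 + t *\<^sub>R w) \<bullet> (x0 + t *\<^sub>R w))"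
        by (rule qbound)
      have h2: "(x0 + t *\<^sub>R w) \<bullet> (C *v (x0 + t *\<^sub>R w)) = l + 2 * t * a + t\<^sup>2 * (w \<bullet> (C *v w))"
        using sym[of x0 w]
        by (simp add: matrix_vector_right_distrib matrix_vector_mult_scaleR inner_add_left
            inner_add_right l_def a_def power2_eq_square algebra_simps inner_commute)
      have h3: "(x0 + t *\<^sub>R w) \<bullet> (x0 + t *\<^sub>R w) = 1 + t\<^sup>2 * (w \<bullet> w)"
        using x0x0 wx0
        by (simp add: inner_add_left inner_add_right power2_eq_square inner_commute)
      have "l + 2 * t * a + t\<^sup>2 * (w \<bullet> (C *v w)) \<le> l * (1 + t\<^sup>2 * (w \<bullet> w))"
        using h1 unfolding h2 h3 .
      thus ?thesis by (simp add: b_def algebra_simps)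
    qed
    hence a0: "a = 0" using real_aux_zero b0 by blast
    have "w \<bullet> w = a - l * (w \<bullet> x0)" unfolding a_def
      by (simp add: w_def inner_diff_right inner_diff_left algebra_simps)
    hence "w = 0" using a0 wx0 by simp
    hence eig: "C *v x0 = l *\<^sub>R x0" by (simp add: w_def)
    define T where "T = {v \<in> S. v \<bullet> x0 = 0}"
    have Tsub: "subspace T" unfolding T_def subspace_def using less.prems(1)
      by (auto simp: subspace_add subspace_scale subspace_0 inner_add_left)
    have Tinv: "C *v v \<in> T" if "v \<in> T" for v
    proof -
      have "(C *v v) \<bullet> x0 = v \<bullet> (C *v x0)" by (rule sym)
      also have "\<dots> = 0" using that eig by (simp add: T_def)
      finally show ?thesis using that less.prems(2) by (simp add: T_def)
    qed
    have TS: "T \<subseteq> S" by (auto simp: T_def)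
    have "x0 \<notin> T" using x0x0 by (simp add: T_def)
    hence "span T \<subset> span S" using TS x0S Tsub less.prems(1)
      by (metis psubsetI span_eq_iff)
    hence "dim T < dim S" by (rule dim_psubset)
    then obtain BT where BT: "BT \<subseteq> T" "pairwise orthogonal BT" "\<forall>x\<in>BT. norm x = 1" "span BT = T"
        "\<forall>b\<in>BT. C *v b = (b \<bullet> (C *v b)) *\<^sub>R b"
      using less.hyps[OF _ Tsub Tinv] by blast
    show ?thesis
    proof (intro exI[of _ "insert x0 BT"] conjI)
      show "insert x0 BT \<subseteq> S" using BT(1) TS x0S by blast
      show "pairwise orthogonal (insert x0 BT)"
        using BT(1,2) unfolding pairwise_insert
        by (auto simp: T_def orthogonal_def inner_commute)
      show "\<forall>x\<in>insert x0 BT. norm x = 1" using BT(3) nx0 by blast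
      show "\<forall>b\<in>insert x0 BT. C *v b = (b \<bullet> (C *v b)) *\<^sub>R b"
        using BT(5) eig x0x0 by (simp add: l_def)
      show "span (insert x0 BT) = S"
      proof
        show "span (insert x0 BT) \<subseteq> S"
          using BT(1) TS x0S less.prems(1) by (simp add: span_minimal)
        show "S \<subseteq> span (insert x0 BT)"
        proof
          fix s assume s: "s \<in> S"
          have "s - (s \<bullet> x0) *\<^sub>R x0 \<in> T" using s x0S x0x0 less.prems(1)
            by (simp add: T_def subspace_diff subspace_scale inner_diff_left)
          hence "s - (s \<bullet> x0) *\<^sub>R x0 \<in> span BT" using BT(4) by simp
          thus "s \<in> span (insert x0 BT)" using span_breakdown_eq by blast
        qed
      qed
    qed
  qed
qed

lemma sym_dot:
  fixes C :: "real^'n^'n"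
  assumes "transpose C = C"
  shows "(C *v x) \<bullet> y = x \<bullet> (C *v y)"
proof -
  have "(C *v x) \<bullet> y = (x v* transpose C) \<bullet> y" by simp
  also have "\<dots> = x \<bullet> (transpose C *v y)" by (rule dot_lmul_matrix)
  finally show ?thesis using assms by simp
qed

lemma matrix_add_rdistrib':
  fixes A B C :: "real^'n^'n"
  shows "(B + C) ** A = B ** A + C ** A"
  by (simp add: vec_eq_iff matrix_matrix_mult_def sum.distrib distrib_right)

definition diagm :: "('n \<Rightarrow> real) \<Rightarrow> real^'n^'n" where
  "diagm D = (\<chi> i j. if i = j then D j else 0)"

lemma spectral_matrix:
  fixes C :: "real^'n^'n"
  assumes symC: "transpose C = C"
  shows "\<exists>(P::real^'n^'n) D. transpose P ** P = mat 1 \<and> C ** P = P ** diagm D \<and>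
      (\<forall>j. \<exists>u. D j = u \<bullet> (C *v u))"
proof -
  have sym: "\<And>x y. (C *v x) \<bullet> y = x \<bullet> (C *v y)" using sym_dot[OF symC] .
  obtain B where B: "pairwise orthogonal B" "\<forall>x\<in>B. norm x = 1" "span B = UNIV"
      "\<forall>b\<in>B. C *v b = (b \<bullet> (C *v b)) *\<^sub>R b"
    using spectral_subspace[OF sym, of UNIV] by auto
  have "0 \<notin> B" using B(2) by force
  hence ind: "independent B" using B(1) pairwise_orthogonal_independent by blast
  hence finB: "finite B" using indep_card_eq_dim_span by blast
  have "card B = dim (UNIV :: (real^'n) set)"
    using basis_card_eq_dim[of B UNIV] ind B(3) by auto
  hence "card B = CARD('n)" by (simp add: dim_UNIV)
  then obtain g where g: "bij_betw g (UNIV :: 'n set) B"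
    using finite_same_card_bij[of "UNIV :: 'n set" B] finB by auto
  define P :: "real^'n^'n" where "P = (\<chi> i j. g j $ i)"
  define D where "D = (\<lambda>j. g j \<bullet> (C *v g j))"
  have gB: "g j \<in> B" for j using g by (auto simp: bij_betw_def)
  have ginj: "g j = g k \<Longrightarrow> j = k" for j k using g by (auto simp: bij_betw_def inj_def)
  have gg: "g j \<bullet> g k = (if j = k then 1 else 0)" for j k
  proof (cases "j = k")
    case True
    thus ?thesis using B(2) gB[of j] by (simp add: dot_square_norm)
  next
    case False
    hence "g j \<noteq> g k" using ginj by blast
    thus ?thesis using B(1) gB[of j] gB[of k] False
      by (auto simp: pairwise_def orthogonal_def)
  qed
  have "transpose P ** P = mat 1"
    by (simp add: vec_eq_iff matrix_matrix_mult_def transpose_def P_def mat_def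
        gg[symmetric] inner_vec_def)
  moreover have "C ** P = P ** diagm D"
  proof -
    have "(C ** P) $ i $ j = (P ** diagm D) $ i $ j" for i j
    proof -
      have "(C ** P) $ i $ j = (C *v g j) $ i"
        by (simp add: matrix_matrix_mult_def matrix_vector_mult_def P_def)
      also have "\<dots> = D j * g j $ i"
      proof -
        have e: "C *v g j = D j *\<^sub>R g j" unfolding D_def using B(4) gB[of j] by blast
        show ?thesis by (simp only: e) simp
      qed
      also have "\<dots> = (P ** diagm D) $ i $ j"
        by (simp add: matrix_matrix_mult_def diagm_def P_def if_distrib cong: if_cong)
      finally show ?thesis .
    qed
    thus ?thesis by (simp add: vec_eq_iff)
  qed
  moreover have "\<forall>j. \<exists>u. D j = u \<bullet> (C *v u)" by (auto simp: D_def)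
  ultimately show ?thesis by blast
qed

lemma psd_det_bounds:
  fixes C :: "real^'n^'n"
  assumes symC: "transpose C = C" and psd: "\<And>x. 0 \<le> x \<bullet> (C *v x)"
  shows "1 \<le> det (mat 1 + C) \<and> det (mat 1 + C) \<le> exp (trace C)"
proof -
  obtain P :: "real^'n^'n" and D where P: "transpose P ** P = mat 1" "C ** P = P ** diagm D"
      and Dnn: "\<And>j. \<exists>u. D j = u \<bullet> (C *v u)"
    using spectral_matrix[OF symC] by blast
  have D0: "D j \<ge> 0" for j using Dnn[of j] psd by auto
  have PP: "P ** transpose P = mat 1" using P(1) matrix_left_right_inverse[of "transpose P" P] by simp
  have "(mat 1 + C) ** P = P ** (mat 1 + diagm D)"
    by (simp add: matrix_add_rdistrib' matrix_add_ldistrib P(2))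
  hence "det (mat 1 + C) * det P = det P * det (mat 1 + diagm D)"
    by (metis det_mul)
  moreover have "det P * det P = 1"
    using P(1) by (metis det_I det_mul det_transpose)
  ultimately have dC: "det (mat 1 + C) = det (mat 1 + diagm D)"
    by (metis mult.commute mult_cancel_left mult_zero_left zero_neq_one)
  have "det (mat 1 + diagm D) = (\<Prod>j\<in>UNIV. 1 + D j)"
    by (subst det_diagonal) (auto simp: diagm_def mat_def)
  hence dC': "det (mat 1 + C) = (\<Prod>j\<in>UNIV. 1 + D j)" using dC by simp
  have "trace C = trace (C ** (P ** transpose P))" using PP by simp
  also have "\<dots> = trace (transpose P ** (C ** P))"
    by (metis matrix_mul_assoc trace_mul_sym)
  also have "\<dots> = trace ((transpose P ** P) ** diagm D)"
    by (simp add: P(2) matrix_mul_assoc)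
  also have "\<dots> = (\<Sum>j\<in>UNIV. D j)"
    by (simp add: P(1) trace_def diagm_def)
  finally have tC: "trace C = (\<Sum>j\<in>UNIV. D j)" .
  have "1 \<le> (\<Prod>j\<in>UNIV. 1 + D j)" using D0 by (intro prod_ge_1) auto
  moreover have "(\<Prod>j\<in>UNIV. 1 + D j) \<le> (\<Prod>j\<in>UNIV. exp (D j))"
    using D0 by (intro prod_mono) auto
  moreover have "(\<Prod>j\<in>UNIV. exp (D j)) = exp (trace C)"
    by (simp add: tC exp_sum)
  ultimately show ?thesis using dC' by simp
qed

lemma inv_unique:
  fixes M X :: "real^'n^'n"
  assumes "M ** X = mat 1"
  shows "matrix_inv M = X"
proof -
  have "X ** M = mat 1" using assms matrix_left_right_inverse by blast
  hence "\<exists>A'. M ** A' = mat 1 \<and> A' ** M = mat 1" using assms by blast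
  hence h: "M ** matrix_inv M = mat 1 \<and> matrix_inv M ** M = mat 1"
    unfolding matrix_inv_def by (rule someI_ex)
  have "matrix_inv M = matrix_inv M ** (M ** X)" using assms by simp
  also have "\<dots> = X" using h by (simp add: matrix_mul_assoc)
  finally show ?thesis .
qed

lemma inv_eqs:
  fixes M :: "real^'n^'n"
  assumes "invertible M"
  shows "M ** matrix_inv M = mat 1" "matrix_inv M ** M = mat 1"
proof -
  have "\<exists>A'. M ** A' = mat 1 \<and> A' ** M = mat 1" using assms by (simp add: invertible_def)
  hence h: "M ** matrix_inv M = mat 1 \<and> matrix_inv M ** M = mat 1"
    unfolding matrix_inv_def by (rule someI_ex)
  thus "M ** matrix_inv M = mat 1" "matrix_inv M ** M = mat 1" by auto
qed

lemma pd_invertible: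
  fixes M :: "real^'n^'n"
  assumes pd: "\<And>x. x \<noteq> 0 \<Longrightarrow> 0 < x \<bullet> (M *v x)"
  shows "invertible M"
proof -
  have "inj ((*v) M)"
  proof (rule linear_injective_0[THEN iffD2])
    show "linear ((*v) M)" by (rule matrix_vector_mul_linear)
    show "\<forall>x. M *v x = 0 \<longrightarrow> x = 0" using pd by force
  qed
  hence "det (matrix ((*v) M)) \<noteq> 0" using det_nz_iff_inj matrix_vector_mul_linear by blast
  thus ?thesis by (simp add: invertible_det_nz)
qed

lemma key_matrix:
  fixes S B :: "real^'m^'m"
  assumes Ssym: "transpose S = S" and Spd: "\<And>x. x \<noteq> 0 \<Longrightarrow> 0 < x \<bullet> (S *v x)"
    and Bsym: "transpose B = B" and Bpsd: "\<And>x. 0 \<le> x \<bullet> (B *v x)"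
  shows "0 < det (S ** S)"
    and "det (S ** S) \<le> det (S ** S + B)"
    and "det (S ** S + B) \<le> det (S ** S) * exp (trace (matrix_inv (S ** S) ** B))"
    and "\<And>x. x \<bullet> (matrix_inv (S ** S) *v x) = (norm (matrix_inv S *v x))\<^sup>2"
    and "\<And>x. 0 \<le> x \<bullet> (matrix_inv (S ** S + B) *v x)"
    and "\<And>x. x \<bullet> (matrix_inv (S ** S + B) *v x) \<le> (norm (matrix_inv S *v x))\<^sup>2"
proof -
  define Si where "Si = matrix_inv S"
  have Sinv: "invertible S" using pd_invertible Spd by blast
  have SSi: "S ** Si = mat 1" "Si ** S = mat 1" using inv_eqs[OF Sinv] by (auto simp: Si_def)
  have Sisym: "transpose Si = Si"
  proof -
    have "transpose Si ** S = mat 1"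
      using SSi(1) by (metis Ssym matrix_transpose_mul transpose_mat)
    hence "transpose Si = transpose Si ** (S ** Si)" using SSi by simp
    also have "\<dots> = Si" using \<open>transpose Si ** S = mat 1\<close> by (simp add: matrix_mul_assoc)
    finally show ?thesis .
  qed
  have iA: "matrix_inv (S ** S) = Si ** Si"
  proof (rule inv_unique)
    have "(S ** S) ** (Si ** Si) = S ** ((S ** Si) ** Si)" by (simp add: matrix_mul_assoc)
    also have "\<dots> = mat 1" using SSi by simp
    finally show "(S ** S) ** (Si ** Si) = mat 1" .
  qed
  define C where "C = Si ** B ** Si"
  have Csym: "transpose C = C" unfolding C_def
    by (simp add: matrix_transpose_mul Sisym Bsym matrix_mul_assoc)
  have Cpsd: "0 \<le> x \<bullet> (C *v x)" for x
  proof -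
    have "x \<bullet> (C *v x) = (Si *v x) \<bullet> (B *v (Si *v x))"
      unfolding C_def using sym_dot[OF Sisym, of x "B *v (Si *v x)"]
      by (simp add: matrix_vector_mul_assoc inner_commute matrix_mul_assoc)
    thus ?thesis using Bpsd by simp
  qed
  have AB: "S ** S + B = S ** (mat 1 + C) ** S"
  proof -
    have "S ** C ** S = (S ** Si) ** B ** (Si ** S)" unfolding C_def by (simp add: matrix_mul_assoc)
    also have "\<dots> = B" using SSi by simp
    finally show ?thesis by (simp add: matrix_add_ldistrib matrix_add_rdistrib')
  qed
  have dS: "det S \<noteq> 0" using Sinv invertible_det_nz by blast
  have dA: "det (S ** S) = det S * det S" by (simp add: det_mul)
  have dAB: "det (S ** S + B) = det (S ** S) * det (mat 1 + C)"
    unfolding AB dA by (simp add: det_mul)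
  have tr: "trace (matrix_inv (S ** S) ** B) = trace C"
  proof -
    have "trace C = trace (Si ** (B ** Si))" by (simp add: C_def matrix_mul_assoc)
    also have "\<dots> = trace ((B ** Si) ** Si)" by (rule trace_mul_sym)
    also have "\<dots> = trace (B ** (Si ** Si))" by (simp add: matrix_mul_assoc)
    also have "\<dots> = trace ((Si ** Si) ** B)" by (rule trace_mul_sym)
    finally show ?thesis using iA by simp
  qed
  have bnd: "1 \<le> det (mat 1 + C)" "det (mat 1 + C) \<le> exp (trace C)"
    using psd_det_bounds[OF Csym Cpsd] by auto
  show dpos: "0 < det (S ** S)" unfolding dA using dS not_real_square_gt_zero by blast
  show "det (S ** S) \<le> det (S ** S + B)" using dAB bnd dpos by simp
  show "det (S ** S + B) \<le> det (S ** S) * exp (trace (matrix_inv (S ** S) ** B))"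
    using dAB bnd dpos tr by simp
  show qA: "x \<bullet> (matrix_inv (S ** S) *v x) = (norm (matrix_inv S *v x))\<^sup>2" for x
  proof -
    have "x \<bullet> (matrix_inv (S ** S) *v x) = x \<bullet> (Si *v (Si *v x))"
      by (simp add: iA matrix_vector_mul_assoc)
    also have "\<dots> = (Si *v x) \<bullet> (Si *v x)" using sym_dot[OF Sisym] by simp
    finally show ?thesis by (simp add: Si_def dot_square_norm)
  qed
  have ABinv: "invertible (S ** S + B)"
    using dAB bnd dpos by (simp add: invertible_det_nz)
  fix x
  define v where "v = matrix_inv (S ** S + B) *v x"
  have Av: "(S ** S + B) *v v = x"
    unfolding v_def by (simp add: matrix_vector_mul_assoc inv_eqs[OF ABinv])
  have xv: "x \<bullet> v = (S *v v) \<bullet> (S *v v) + v \<bullet> (B *v v)"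
  proof -
    have "x \<bullet> v = ((S ** S) *v v) \<bullet> v + (B *v v) \<bullet> v"
      using Av by (metis inner_add_left matrix_vector_mult_add_rdistrib)
    also have "((S ** S) *v v) \<bullet> v = (S *v v) \<bullet> (S *v v)"
      using sym_dot[OF Ssym, of "S *v v" v] by (simp add: matrix_vector_mul_assoc)
    also have "(B *v v) \<bullet> v = v \<bullet> (B *v v)" by (simp add: inner_commute)
    finally show ?thesis .
  qed
  have n2: "(norm (S *v v))\<^sup>2 \<le> x \<bullet> v"
    using xv Bpsd[of v] by (simp add: dot_square_norm)
  show "0 \<le> x \<bullet> (matrix_inv (S ** S + B) *v x)"
    using n2 unfolding v_def by (meson order_trans zero_le_power2)
  have "x = S *v (Si *v x)" using SSi by (simp add: matrix_vector_mul_assoc)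
  hence "x \<bullet> v = (Si *v x) \<bullet> (S *v v)"
    using sym_dot[OF Ssym, of "Si *v x" v] by metis
  also have "\<dots> \<le> norm (Si *v x) * norm (S *v v)" by (rule norm_cauchy_schwarz)
  finally have cs: "x \<bullet> v \<le> norm (Si *v x) * norm (S *v v)" .
  have "norm (S *v v) \<le> norm (Si *v x)"
  proof (cases "norm (S *v v) = 0")
    case True thus ?thesis by simp
  next
    case False
    hence pos: "norm (S *v v) > 0" by simp
    have "norm (S *v v) * norm (S *v v) \<le> norm (Si *v x) * norm (S *v v)"
      using n2 cs by (simp add: power2_eq_square)
    thus ?thesis using pos by simp
  qed
  hence "x \<bullet> v \<le> norm (Si *v x) * norm (Si *v x)"
    using cs by (meson mult_left_mono norm_ge_zero order_trans)
  thus "x \<bullet> (matrix_inv (S ** S + B) *v x) \<le> (norm (matrix_inv S *v x))\<^sup>2"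
    by (simp add: v_def Si_def power2_eq_square)
qed

lemma cont_mv[continuous_intros]:
  fixes M :: "real^'n^'m"
  shows "continuous_on S f \<Longrightarrow> continuous_on S (\<lambda>x. M *v f x)"
  using continuous_on_compose2[OF matrix_vector_mult_linear_continuous_on[of UNIV M], of S f] by auto

lemma cont_if_const:
  "continuous_on S f \<Longrightarrow> continuous_on S g \<Longrightarrow> continuous_on S (\<lambda>x. if P then f x else g x)"
  by (cases P) auto

lemma cont_det:
  fixes f :: "'a::topological_space \<Rightarrow> real^'n^'n"
  assumes "continuous_on S f"
  shows "continuous_on S (\<lambda>x. det (f x))"
  unfolding det_def using assms by (intro continuous_intros)

lemma meas_det:
  fixes f :: "'a \<Rightarrow> real^'n^'n"
  assumes "f \<in> borel_measurable M"
  shows "(\<lambda>x. det (f x)) \<in> borel_measurable M"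
  using borel_measurable_continuous_on[OF cont_det[OF continuous_on_id] assms] by simp

lemma evid_pos:
  fixes prior L h :: "'d::euclidean_space \<Rightarrow> real"
  assumes nn: "\<And>p. p \<in> \<Omega> \<Longrightarrow> 0 \<le> prior p"
    and pint: "set_integrable lborel \<Omega> prior" and pone: "(LINT p:\<Omega>|lborel. prior p) = 1"
    and hm: "h \<in> borel_measurable lborel" and hL: "\<And>p. p \<in> \<Omega> \<Longrightarrow> L p = h p"
    and Lpos: "\<And>p. p \<in> \<Omega> \<Longrightarrow> 0 < L p" and Lb: "\<And>p. p \<in> \<Omega> \<Longrightarrow> L p \<le> c"
  shows "set_integrable lborel \<Omega> (\<lambda>p. prior p * L p)"
    and "0 < (LINT p:\<Omega>|lborel. prior p * L p)"
proof -
  have pm: "(\<lambda>x. indicator \<Omega> x *\<^sub>R prior x) \<in> borel_measurable lborel"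
    using pint unfolding set_integrable_def by (rule borel_measurable_integrable)
  have "(\<lambda>x. indicator \<Omega> x *\<^sub>R (prior x * L x)) = (\<lambda>x. (indicator \<Omega> x *\<^sub>R prior x) * h x)"
    using hL by (auto simp: indicator_def fun_eq_iff)
  hence meas: "set_borel_measurable lborel \<Omega> (\<lambda>p. prior p * L p)"
    unfolding set_borel_measurable_def using pm hm by simp
  show int: "set_integrable lborel \<Omega> (\<lambda>p. prior p * L p)"
  proof (rule set_integrable_bound[OF _ meas])
    show "set_integrable lborel \<Omega> (\<lambda>p. \<bar>c\<bar> * prior p)" using pint by simp
    have "norm (prior x * L x) \<le> norm (\<bar>c\<bar> * prior x)" if x: "x \<in> \<Omega>" for x
    proof -
      have "prior x * L x \<le> prior x * \<bar>c\<bar>"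
        using Lb[OF x] nn[OF x] by (intro mult_left_mono) auto
      thus ?thesis using nn[OF x] Lpos[OF x] by (simp add: abs_mult mult.commute)
    qed
    thus "AE x in lborel. x \<in> \<Omega> \<longrightarrow> norm (prior x * L x) \<le> norm (\<bar>c\<bar> * prior x)"
      by (intro AE_I2) auto
  qed
  define F where "F = (\<lambda>x. indicator \<Omega> x *\<^sub>R (prior x * L x))"
  have Fint: "integrable lborel F" using int by (simp add: set_integrable_def F_def)
  have Fnn: "AE x in lborel. 0 \<le> F x" using nn Lpos
    by (intro AE_I2) (auto simp: F_def indicator_def less_imp_le)
  have I: "(LINT p:\<Omega>|lborel. prior p * L p) = integral\<^sup>L lborel F"
    by (simp add: set_lebesgue_integral_def F_def)
  have "integral\<^sup>L lborel F \<ge> 0" using Fnn by (simp add: integral_nonneg_AE)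
  moreover have "integral\<^sup>L lborel F \<noteq> 0"
  proof
    assume "integral\<^sup>L lborel F = 0"
    hence "AE x in lborel. F x = 0" using integral_nonneg_eq_0_iff_AE[OF Fint Fnn] by simp
    hence "AE x in lborel. indicator \<Omega> x *\<^sub>R prior x = 0"
      by eventually_elim (use Lpos in \<open>fastforce simp: F_def indicator_def split: if_splits\<close>)
    hence "(LINT p:\<Omega>|lborel. prior p) = 0" unfolding set_lebesgue_integral_def
      by (simp add: integral_eq_zero_AE)
    thus False using pone by simp
  qed
  ultimately show "0 < (LINT p:\<Omega>|lborel. prior p * L p)" using I by simp
qed

lemma core_ineq:
  fixes dA dAB t sr sd Qb k :: real
  assumes dA: "0 < dA" and d1: "dA \<le> dAB" and d2: "dAB \<le> dA * exp t"
    and Q: "Qb \<le> (sr + sd)\<^sup>2" and k: "0 < k"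
  shows "k * dA powr (-1/2) * exp (-(1/2) * sr\<^sup>2)
     \<le> k * dAB powr (-1/2) * exp (-(1/2) * Qb) * exp (1/2 * t + (sd\<^sup>2 / 2 + sr * sd))"
proof -
  have dAB: "0 < dAB" using dA d1 by simp
  have "ln dAB \<le> ln (dA * exp t)" using dAB d2 by simp
  hence lnb: "ln dAB \<le> ln dA + t" using dA by (simp add: ln_mult)
  have Q': "Qb \<le> sr\<^sup>2 + 2 * sr * sd + sd\<^sup>2" using Q by (simp add: power2_sum)
  have ex: "-(1/2) * ln dA + (-(1/2) * sr\<^sup>2)
      \<le> -(1/2) * ln dAB + (-(1/2) * Qb) + (1/2 * t + (sd\<^sup>2 / 2 + sr * sd))"
    using lnb Q' by linarith
  have "k * dA powr (-1/2) * exp (-(1/2) * sr\<^sup>2) = k * exp (-(1/2) * ln dA + (-(1/2) * sr\<^sup>2))"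
    using dA by (simp add: powr_def mult_exp_exp mult.assoc)
  also have "\<dots> \<le> k * exp (-(1/2) * ln dAB + (-(1/2) * Qb) + (1/2 * t + (sd\<^sup>2 / 2 + sr * sd)))"
    using ex k by simp
  also have "\<dots> = k * dAB powr (-1/2) * exp (-(1/2) * Qb) * exp (1/2 * t + (sd\<^sup>2 / 2 + sr * sd))"
    using dAB by (simp add: powr_def mult_exp_exp mult.assoc)
  finally show ?thesis .
qed

theorem corollary1:
  fixes \<Omega> :: "(real^'d) set"
    and y ybar :: "real^'d \<Rightarrow> real^'m"
    and \<Gamma> :: "real^'d \<Rightarrow> real^'m^'m"
    and prior :: "real^'d \<Rightarrow> real"
    and ym :: "real^'m"
    and \<Sigma> :: "real^'m^'m"
    and \<alpha> :: real
  assumes \<Omega>_meas: "\<Omega> \<in> sets lborel"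
    and prior_nonneg: "\<And>p. p \<in> \<Omega> \<Longrightarrow> 0 \<le> prior p"
    and prior_int: "set_integrable lborel \<Omega> prior"
    and prior_one: "(LINT p:\<Omega>|lborel. prior p) = 1"
    and y_meas: "set_borel_measurable lborel \<Omega> y"
    and ybar_meas: "set_borel_measurable lborel \<Omega> ybar"
    and \<Gamma>_meas: "set_borel_measurable lborel \<Omega> \<Gamma>"
    and \<Sigma>_sym: "transpose \<Sigma> = \<Sigma>"
    and \<Sigma>_pd: "\<And>x. x \<noteq> 0 \<Longrightarrow> 0 < x \<bullet> (\<Sigma> *v x)"
    and \<Gamma>_sym: "\<And>p. p \<in> \<Omega> \<Longrightarrow> transpose (\<Gamma> p) = \<Gamma> p"
    and \<Gamma>_psd: "\<And>p x. p \<in> \<Omega> \<Longrightarrow> 0 \<le> x \<bullet> (\<Gamma> p *v x)"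
    and evid_bound: "evidenceD \<Omega> prior \<Sigma> ybar \<Gamma> ym \<le> \<alpha> * evidence \<Omega> prior \<Sigma> y ym"
  shows "(\<integral>\<^sup>+ p \<in> \<Omega>. ennreal (posterior \<Omega> prior \<Sigma> y ym p * (norm (y p - ybar p))\<^sup>2) \<partial>lborel)
         \<le> (\<integral>\<^sup>+ p \<in> \<Omega>. ennreal (posteriorD \<Omega> prior \<Sigma> ybar \<Gamma> ym p * (norm (y p - ybar p))\<^sup>2
                                  * exp (psi \<Sigma> y ybar \<Gamma> \<alpha> ym p)) \<partial>lborel)"
proof -
  define A where "A = \<Sigma> ** \<Sigma>"
  define Si where "Si = matrix_inv \<Sigma>"
  define k :: real where "k = (2 * pi) powr (- real CARD('m) / 2)"
  have kpos: "0 < k" unfolding k_def by simp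
  have Z0sym: "transpose (mat 0 :: real^'m^'m) = mat 0" by (rule transpose_mat)
  have Z0psd: "0 \<le> x \<bullet> ((mat 0 :: real^'m^'m) *v x)" for x
    by (simp add: matrix_vector_mult_def mat_def inner_vec_def)
  note KM0 = key_matrix[OF \<Sigma>_sym \<Sigma>_pd Z0sym Z0psd]
  have dApos: "0 < det A" using KM0(1) by (simp add: A_def)
  have wA: "wnorm (matrix_inv A) x = norm (Si *v x)" for x
    using KM0(4)[of x] by (simp add: wnorm_def A_def Si_def)
  define c where "c = k * det A powr (- 1 / 2)"
  have cpos: "0 < c" using kpos dApos by (simp add: c_def)
  have lik_eq: "lik \<Sigma> y ym p = c * exp (- (1 / 2) * (norm (Si *v (ym - y p)))\<^sup>2)" for p
    using wA[of "ym - y p"] by (simp add: lik_def gauss_lik_def k_def A_def c_def)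
  have lik_pos: "0 < lik \<Sigma> y ym p" for p using cpos by (simp add: lik_eq)
  have lik_le: "lik \<Sigma> y ym p \<le> c" for p
    using cpos by (simp add: lik_eq)
  define y' where "y' = (\<lambda>p. indicator \<Omega> p *\<^sub>R y p)"
  have y'm: "y' \<in> borel_measurable lborel"
    using y_meas by (simp add: set_borel_measurable_def y'_def)
  have c1: "continuous_on UNIV (\<lambda>v. c * exp (- (1 / 2) * (norm (Si *v (ym - v)))\<^sup>2))"
    by (intro continuous_intros)
  define h1 where "h1 = (\<lambda>p. c * exp (- (1 / 2) * (norm (Si *v (ym - y' p)))\<^sup>2))"
  have h1m: "h1 \<in> borel_measurable lborel"
    using borel_measurable_continuous_on[OF c1 y'm] by (simp add: h1_def)
  have h1eq: "lik \<Sigma> y ym p = h1 p" if "p \<in> \<Omega>" for p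
    using that by (simp add: h1_def y'_def lik_eq)
  have Zpos: "0 < evidence \<Omega> prior \<Sigma> y ym"
    unfolding evidence_def
    by (rule evid_pos(2)[OF prior_nonneg prior_int prior_one h1m h1eq lik_pos lik_le])

  have KMp: "0 < det A" "det A \<le> det (A + \<Gamma> p)"
      "det (A + \<Gamma> p) \<le> det A * exp (trace (matrix_inv A ** \<Gamma> p))"
      "\<And>x. 0 \<le> x \<bullet> (matrix_inv (A + \<Gamma> p) *v x)"
      "\<And>x. x \<bullet> (matrix_inv (A + \<Gamma> p) *v x) \<le> (norm (Si *v x))\<^sup>2"
    if p: "p \<in> \<Omega>" for p
    using key_matrix[OF \<Sigma>_sym \<Sigma>_pd \<Gamma>_sym[OF p] \<Gamma>_psd[OF p]]
    by (simp_all add: A_def Si_def)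
  have dNpos: "0 < det (A + \<Gamma> p)" if "p \<in> \<Omega>" for p
    using KMp[OF that] by linarith
  have likD_eq: "likD \<Sigma> ybar \<Gamma> ym p = k * det (A + \<Gamma> p) powr (- 1 / 2)
      * exp (- (1 / 2) * ((ym - ybar p) \<bullet> (matrix_inv (A + \<Gamma> p) *v (ym - ybar p))))"
    if "p \<in> \<Omega>" for p
    using KMp(4)[OF that, of "ym - ybar p"]
    by (simp add: likD_def gauss_lik_def wnorm_def k_def A_def)
  have likD_pos: "0 < likD \<Sigma> ybar \<Gamma> ym p" if "p \<in> \<Omega>" for p
    using kpos dNpos[OF that] by (simp add: likD_eq[OF that])
  have likD_le: "likD \<Sigma> ybar \<Gamma> ym p \<le> c" if p: "p \<in> \<Omega>" for p
  proof -
    have "det (A + \<Gamma> p) powr (- 1 / 2) \<le> det A powr (- 1 / 2)"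
      using KMp(2)[OF p] dApos by (intro powr_mono2') auto
    moreover have "exp (- (1 / 2) * ((ym - ybar p) \<bullet> (matrix_inv (A + \<Gamma> p) *v (ym - ybar p)))) \<le> 1"
      using KMp(4)[OF p, of "ym - ybar p"] by simp
    ultimately have "det (A + \<Gamma> p) powr (- 1 / 2)
      * exp (- (1 / 2) * ((ym - ybar p) \<bullet> (matrix_inv (A + \<Gamma> p) *v (ym - ybar p))))
      \<le> det A powr (- 1 / 2) * 1"
      by (intro mult_mono) auto
    thus ?thesis using kpos by (simp add: likD_eq[OF p] c_def mult.assoc)
  qed

  define \<Gamma>' where "\<Gamma>' = (\<lambda>p. indicator \<Omega> p *\<^sub>R \<Gamma> p)"
  define yb' where "yb' = (\<lambda>p. indicator \<Omega> p *\<^sub>R ybar p)"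
  have \<Gamma>'m: "\<Gamma>' \<in> borel_measurable lborel"
    using \<Gamma>_meas by (simp add: set_borel_measurable_def \<Gamma>'_def)
  have yb'm: "yb' \<in> borel_measurable lborel"
    using ybar_meas by (simp add: set_borel_measurable_def yb'_def)
  define N' where "N' = (\<lambda>p. A + \<Gamma>' p)"
  define r' where "r' = (\<lambda>p. ym - yb' p)"
  have N'm: "N' \<in> borel_measurable lborel" unfolding N'_def using \<Gamma>'m by simp
  have r'm: "r' \<in> borel_measurable lborel" unfolding r'_def using yb'm by simp
  define cm where "cm = (\<lambda>j p. (\<chi> i l. if l = j then r' p $ i else N' p $ i $ l) :: real^'m^'m)"
  have cmm: "cm j \<in> borel_measurable lborel" for j
  proof -
    have cont: "continuous_on UNIV (\<lambda>z::((real^'m^'m) \<times> (real^'m)).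
        (\<chi> i l. if l = j then snd z $ i else fst z $ i $ l) :: real^'m^'m)"
      by (intro continuous_on_vec_lambda cont_if_const continuous_intros)
    show ?thesis
      using borel_measurable_continuous_on[OF cont borel_measurable_Pair[OF N'm r'm]]
      unfolding fst_conv snd_conv cm_def .
  qed
  have dcm: "(\<lambda>p. det (cm j p)) \<in> borel_measurable lborel" for j
    by (rule meas_det[OF cmm])
  have dN'm: "(\<lambda>p. det (N' p)) \<in> borel_measurable lborel"
    by (rule meas_det[OF N'm])
  have r'jm: "(\<lambda>p. r' p $ j) \<in> borel_measurable lborel" for j
    using borel_measurable_continuous_on[OF continuous_on_component[OF continuous_on_id] r'm] by simp
  define h2 where "h2 = (\<lambda>p. k * det (N' p) powr (- 1 / 2)
      * exp (- (1 / 2) * (\<Sum>j\<in>UNIV. r' p $ j * (det (cm j p) / det (N' p)))))"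
  have h2m: "h2 \<in> borel_measurable lborel"
    unfolding h2_def
    by (intro borel_measurable_times borel_measurable_const powr_real_measurable
        measurable_compose[OF _ borel_measurable_exp] borel_measurable_sum borel_measurable_divide dcm dN'm r'jm)
  have h2eq: "likD \<Sigma> ybar \<Gamma> ym p = h2 p" if p: "p \<in> \<Omega>" for p
  proof -
    define N where "N = A + \<Gamma> p"
    define r where "r = ym - ybar p"
    have NN: "N' p = N" "r' p = r" using p by (simp_all add: N'_def \<Gamma>'_def N_def r'_def yb'_def r_def)
    have dN: "det N \<noteq> 0" using dNpos[OF p] by (simp add: N_def)
    hence Ninv: "invertible N" by (simp add: invertible_det_nz)
    have "N *v (matrix_inv N *v r) = r"
      by (simp add: matrix_vector_mul_assoc inv_eqs[OF Ninv])
    hence cr: "matrix_inv N *v r = (\<chi> j. det (\<chi> i l. if l = j then r $ i else N $ i $ l) / det N)"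
      using cramer[OF dN] by blast
    have "r \<bullet> (matrix_inv N *v r) = (\<Sum>j\<in>UNIV. r $ j * (det (cm j p) / det N))"
      unfolding cr cm_def NN by (simp add: inner_vec_def)
    thus ?thesis using likD_eq[OF p] NN
      by (simp add: h2_def N_def r_def)
  qed
  have ZDpos: "0 < evidenceD \<Omega> prior \<Sigma> ybar \<Gamma> ym"
    unfolding evidenceD_def
    by (rule evid_pos(2)[OF prior_nonneg prior_int prior_one h2m h2eq likD_pos likD_le])
  have apos: "0 < \<alpha>"
  proof -
    have "0 < \<alpha> * evidence \<Omega> prior \<Sigma> y ym" using ZDpos evid_bound by linarith
    thus ?thesis using Zpos by (simp add: zero_less_mult_iff)
  qed

  have point: "posterior \<Omega> prior \<Sigma> y ym p * (norm (y p - ybar p))\<^sup>2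
      \<le> posteriorD \<Omega> prior \<Sigma> ybar \<Gamma> ym p * (norm (y p - ybar p))\<^sup>2 * exp (psi \<Sigma> y ybar \<Gamma> \<alpha> ym p)"
    if p: "p \<in> \<Omega>" for p
  proof -
    define Z where "Z = evidence \<Omega> prior \<Sigma> y ym"
    define ZD where "ZD = evidenceD \<Omega> prior \<Sigma> ybar \<Gamma> ym"
    define t where "t = trace (matrix_inv A ** \<Gamma> p)"
    define sr where "sr = norm (Si *v (ym - y p))"
    define sd where "sd = norm (Si *v (ybar p - y p))"
    define Qb where "Qb = (ym - ybar p) \<bullet> (matrix_inv (A + \<Gamma> p) *v (ym - ybar p))"
    define E where "E = exp (1/2 * t + (sd\<^sup>2 / 2 + sr * sd))"
    define n where "n = (norm (y p - ybar p))\<^sup>2"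
    have n0: "0 \<le> n" by (simp add: n_def)
    have tri: "norm (Si *v (ym - ybar p)) \<le> sr + sd"
    proof -
      have "ym - ybar p = (ym - y p) - (ybar p - y p)" by simp
      hence "Si *v (ym - ybar p) = Si *v (ym - y p) - Si *v (ybar p - y p)"
        by (metis matrix_vector_mult_diff_distrib)
      thus ?thesis unfolding sr_def sd_def by (metis norm_triangle_ineq4)
    qed
    hence "(norm (Si *v (ym - ybar p)))\<^sup>2 \<le> (sr + sd)\<^sup>2" by (intro power_mono) auto
    hence Qb_le: "Qb \<le> (sr + sd)\<^sup>2" using KMp(5)[OF p, of "ym - ybar p"] by (simp add: Qb_def)
    have core: "lik \<Sigma> y ym p \<le> likD \<Sigma> ybar \<Gamma> ym p * E"
    proof -
      have "k * det A powr (-1/2) * exp (-(1/2) * sr\<^sup>2)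
          \<le> k * det (A + \<Gamma> p) powr (-1/2) * exp (-(1/2) * Qb) * exp (1/2 * t + (sd\<^sup>2 / 2 + sr * sd))"
        by (rule core_ineq[OF dApos KMp(2)[OF p] KMp(3)[OF p, folded t_def] Qb_le kpos])
      thus ?thesis by (simp add: lik_eq c_def likD_eq[OF p] sr_def Qb_def E_def)
    qed
    have psi_eq: "exp (psi \<Sigma> y ybar \<Gamma> \<alpha> ym p) = E * \<alpha>"
    proof -
      have "psi \<Sigma> y ybar \<Gamma> \<alpha> ym p = 1/2 * t + (sd\<^sup>2 / 2 + sr * sd) + ln \<alpha>"
        using wA[of "ybar p - y p", unfolded A_def] wA[of "ym - y p", unfolded A_def]
        by (simp add: psi_def phi_def t_def sd_def sr_def A_def)
      thus ?thesis using apos by (simp add: exp_add E_def)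
    qed
    have Zp: "0 < Z" "0 < ZD" using Zpos ZDpos by (simp_all add: Z_def ZD_def)
    have post: "posterior \<Omega> prior \<Sigma> y ym p = prior p * lik \<Sigma> y ym p / Z"
      by (simp add: posterior_def Z_def)
    have postD: "posteriorD \<Omega> prior \<Sigma> ybar \<Gamma> ym p = prior p * likD \<Sigma> ybar \<Gamma> ym p / ZD"
      by (simp add: posteriorD_def ZD_def)
    have Ep: "0 < E" by (simp add: E_def)
    have X0: "0 \<le> prior p * (likD \<Sigma> ybar \<Gamma> ym p * E)"
      using prior_nonneg[OF p] likD_pos[OF p] Ep by simp
    have s1: "prior p * lik \<Sigma> y ym p / Z \<le> prior p * (likD \<Sigma> ybar \<Gamma> ym p * E) / Z"
      using core prior_nonneg[OF p] Zp by (intro divide_right_mono mult_left_mono) auto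
    have iz: "1 / Z \<le> \<alpha> / ZD"
    proof -
      have "ZD \<le> \<alpha> * Z" using evid_bound by (simp add: Z_def ZD_def)
      thus ?thesis using Zp by (simp add: divide_simps mult.commute)
    qed
    have s2: "prior p * (likD \<Sigma> ybar \<Gamma> ym p * E) / Z \<le> prior p * (likD \<Sigma> ybar \<Gamma> ym p * E) * (\<alpha> / ZD)"
      using mult_left_mono[OF iz X0] by simp
    have s3: "prior p * (likD \<Sigma> ybar \<Gamma> ym p * E) * (\<alpha> / ZD)
        = posteriorD \<Omega> prior \<Sigma> ybar \<Gamma> ym p * exp (psi \<Sigma> y ybar \<Gamma> \<alpha> ym p)"
      unfolding postD psi_eq by (simp add: divide_inverse ac_simps)
    have "posterior \<Omega> prior \<Sigma> y ym p \<le> posteriorD \<Omega> prior \<Sigma> ybar \<Gamma> ym p * exp (psi \<Sigma> y ybar \<Gamma> \<alpha> ym p)"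
      using s1 s2 s3 post by linarith
    hence "posterior \<Omega> prior \<Sigma> y ym p * n \<le> posteriorD \<Omega> prior \<Sigma> ybar \<Gamma> ym p * exp (psi \<Sigma> y ybar \<Gamma> \<alpha> ym p) * n"
      using n0 by (rule mult_right_mono)
    thus ?thesis by (simp add: n_def ac_simps)
  qed
  show ?thesis
    by (intro nn_integral_mono) (auto split: split_indicator intro!: ennreal_leI point)
qed

end
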